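(* Let $R\subset S$ be an integral FCP ring extension. Then $R\subset S$ has a critical ideal if and only if $R\subset S$ is $M$-crucial for some $M\in\mathrm{Max}(R)$. In this case $M$ is the critical ideal of the extension and $M=\sqrt{(R:R[x])}$ for each $x\in S\setminus R$.
   Context: Rings are commutative and unital. An extension $R\subseteq S$ is FCP if every chain in the poset of $R$-subalgebras of $S$ is finite. $(R:T)=\{r\in R\mid rT\subseteq R\}$ for $T\supseteq R$, and $R:x=\{r\in R\mid rx\in R\}$. An ideal $J$ of $R$ is a critical ideal of $R\subset S$ if $J=\sqrt{R:x}$ for every $x\in S\setminus R$. $R\subset S$ is $M$-crucial if $\mathrm{Supp}_R(S/R)=\{P\in\mathrm{Spec}(R)\mid R_P\neq S_P\}=\{M\}$. *)

theory Defs
  imports "HOL-Computational_Algebra.Polynomial"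
begin

text \<open>Rings are subrings (sets) of an ambient commutative ring type.\<close>

definition is_subring :: "'a::comm_ring_1 set \<Rightarrow> bool" where
  "is_subring T \<longleftrightarrow> 1 \<in> T \<and> (\<forall>a\<in>T. \<forall>b\<in>T. a + b \<in> T \<and> a - b \<in> T \<and> a * b \<in> T)"

definition is_ideal :: "'a::comm_ring_1 set \<Rightarrow> 'a set \<Rightarrow> bool" where
  "is_ideal R I \<longleftrightarrow> I \<subseteq> R \<and> 0 \<in> I \<and> (\<forall>a\<in>I. \<forall>b\<in>I. a + b \<in> I)
     \<and> (\<forall>r\<in>R. \<forall>a\<in>I. r * a \<in> I)"

definition prime_ideal :: "'a::comm_ring_1 set \<Rightarrow> 'a set \<Rightarrow> bool" where
  "prime_ideal R P \<longleftrightarrow> is_ideal R P \<and> P \<noteq> R \<and>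
     (\<forall>a\<in>R. \<forall>b\<in>R. a * b \<in> P \<longrightarrow> a \<in> P \<or> b \<in> P)"

definition Spec :: "'a::comm_ring_1 set \<Rightarrow> 'a set set" where
  "Spec R = {P. prime_ideal R P}"

definition maximal_ideal :: "'a::comm_ring_1 set \<Rightarrow> 'a set \<Rightarrow> bool" where
  "maximal_ideal R M \<longleftrightarrow> is_ideal R M \<and> M \<noteq> R \<and>
     (\<forall>J. is_ideal R J \<and> M \<subseteq> J \<longrightarrow> J = M \<or> J = R)"

definition Max_ideals :: "'a::comm_ring_1 set \<Rightarrow> 'a set set" where
  "Max_ideals R = {M. maximal_ideal R M}"

definition radical :: "'a::comm_ring_1 set \<Rightarrow> 'a set \<Rightarrow> 'a set" where
  "radical R I = {r \<in> R. \<exists>n. r ^ n \<in> I}"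

definition conductor :: "'a::comm_ring_1 set \<Rightarrow> 'a set \<Rightarrow> 'a set" where
  "conductor R T = {r \<in> R. \<forall>t\<in>T. r * t \<in> R}"

definition colon_elt :: "'a::comm_ring_1 set \<Rightarrow> 'a \<Rightarrow> 'a set" where
  "colon_elt R x = {r \<in> R. r * x \<in> R}"

definition ring_adj :: "'a::comm_ring_1 set \<Rightarrow> 'a \<Rightarrow> 'a set" where
  "ring_adj R x = \<Inter>{T. is_subring T \<and> insert x R \<subseteq> T}"

definition integral_ext :: "'a::comm_ring_1 set \<Rightarrow> 'a set \<Rightarrow> bool" where
  "integral_ext R S \<longleftrightarrow> (\<forall>s\<in>S. \<exists>p::'a poly. lead_coeff p = 1 \<and> (\<forall>i. coeff p i \<in> R) \<and> poly p s = 0)"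

definition intermediate_rings :: "'a::comm_ring_1 set \<Rightarrow> 'a set \<Rightarrow> 'a set set" where
  "intermediate_rings R S = {T. is_subring T \<and> R \<subseteq> T \<and> T \<subseteq> S}"

definition FCP :: "'a::comm_ring_1 set \<Rightarrow> 'a set \<Rightarrow> bool" where
  "FCP R S \<longleftrightarrow> (\<forall>C. C \<subseteq> intermediate_rings R S \<and> (\<forall>A\<in>C. \<forall>B\<in>C. A \<subseteq> B \<or> B \<subseteq> A)
      \<longrightarrow> finite C)"

text \<open>Localization at the multiplicative set R - P: elements of S_P are equivalence
  classes of pairs (s,u) with s in S, u in R - P, where (a,u) ~ (b,v) iff
  w (a v - b u) = 0 for some w in R - P.  R_P is the image of R \<times> (R - P)
  (canonically identified with the localization of R, since localization is exact).\<close>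
definition loc_class :: "'a::comm_ring_1 set \<Rightarrow> 'a set \<Rightarrow> 'a set \<Rightarrow> 'a \<times> 'a \<Rightarrow> ('a \<times> 'a) set" where
  "loc_class R P S au = {(b, v). b \<in> S \<and> v \<in> R - P \<and>
      (\<exists>w \<in> R - P. w * (fst au * v - b * snd au) = 0)}"

definition localize :: "'a::comm_ring_1 set \<Rightarrow> 'a set \<Rightarrow> 'a set \<Rightarrow> 'a set \<Rightarrow> ('a \<times> 'a) set set" where
  "localize R P S A = loc_class R P S ` (A \<times> (R - P))"

definition Supp :: "'a::comm_ring_1 set \<Rightarrow> 'a set \<Rightarrow> 'a set set" where
  "Supp R S = {P \<in> Spec R. localize R P S R \<noteq> localize R P S S}"

definition crucial :: "'a::comm_ring_1 set \<Rightarrow> 'a set \<Rightarrow> 'a set \<Rightarrow> bool" where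
  "crucial R S M \<longleftrightarrow> Supp R S = {M}"

definition critical_ideal :: "'a::comm_ring_1 set \<Rightarrow> 'a set \<Rightarrow> 'a set \<Rightarrow> bool" where
  "critical_ideal R S J \<longleftrightarrow> is_ideal R J \<and> (\<forall>x \<in> S - R. J = radical R (colon_elt R x))"

end

theory Submission
  imports Defs
begin

lemma sr_one: "is_subring R \<Longrightarrow> 1 \<in> R" by (simp add: is_subring_def)
lemma sr_add: "is_subring R \<Longrightarrow> a \<in> R \<Longrightarrow> b \<in> R \<Longrightarrow> a + b \<in> R" by (simp add: is_subring_def)
lemma sr_diff: "is_subring R \<Longrightarrow> a \<in> R \<Longrightarrow> b \<in> R \<Longrightarrow> a - b \<in> R" by (simp add: is_subring_def)
lemma sr_mult: "is_subring R \<Longrightarrow> a \<in> R \<Longrightarrow> b \<in> R \<Longrightarrow> a * b \<in> R" by (simp add: is_subring_def)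
lemma sr_zero: "is_subring R \<Longrightarrow> 0 \<in> R" using sr_diff[of R 1 1] sr_one by fastforce
lemma sr_neg: "is_subring R \<Longrightarrow> a \<in> R \<Longrightarrow> - a \<in> R" using sr_diff[of R 0 a] sr_zero by fastforce
lemma sr_pow: "is_subring R \<Longrightarrow> a \<in> R \<Longrightarrow> a ^ n \<in> R" by (induct n) (auto simp: sr_one sr_mult)
lemma sr_sum: "is_subring R \<Longrightarrow> (\<And>i. i \<in> A \<Longrightarrow> f i \<in> R) \<Longrightarrow> sum f A \<in> R"
  by (induct A rule: infinite_finite_induct) (auto simp: sr_zero sr_add)

lemma id_sub: "is_ideal R I \<Longrightarrow> a \<in> I \<Longrightarrow> a \<in> R" by (auto simp: is_ideal_def)
lemma id_zero: "is_ideal R I \<Longrightarrow> 0 \<in> I" by (auto simp: is_ideal_def)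
lemma id_add: "is_ideal R I \<Longrightarrow> a \<in> I \<Longrightarrow> b \<in> I \<Longrightarrow> a + b \<in> I" by (auto simp: is_ideal_def)
lemma id_multl: "is_ideal R I \<Longrightarrow> r \<in> R \<Longrightarrow> a \<in> I \<Longrightarrow> r * a \<in> I" by (auto simp: is_ideal_def)
lemma id_multr: "is_ideal R I \<Longrightarrow> r \<in> R \<Longrightarrow> a \<in> I \<Longrightarrow> a * r \<in> I"
  using id_multl[of R I r a] by (simp add: mult.commute)
lemma id_one: "is_subring R \<Longrightarrow> is_ideal R I \<Longrightarrow> 1 \<in> I \<Longrightarrow> I = R"
  using id_multr[of R I _ 1] id_sub[of R I] by fastforce

lemma prime_ideal_ideal: "prime_ideal R P \<Longrightarrow> is_ideal R P" by (simp add: prime_ideal_def)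
lemma prime_ne: "is_subring R \<Longrightarrow> prime_ideal R P \<Longrightarrow> 1 \<notin> P"
  using id_one unfolding prime_ideal_def by blast
lemma prime_one: "is_subring R \<Longrightarrow> prime_ideal R P \<Longrightarrow> 1 \<in> R - P"
  using prime_ne sr_one by blast
lemma prime_mult: "prime_ideal R P \<Longrightarrow> a \<in> R - P \<Longrightarrow> b \<in> R - P \<Longrightarrow> is_subring R \<Longrightarrow> a * b \<in> R - P"
  unfolding prime_ideal_def using sr_mult by blast
lemma prime_pow: "is_subring R \<Longrightarrow> prime_ideal R P \<Longrightarrow> r \<in> R \<Longrightarrow> r ^ n \<in> P \<Longrightarrow> r \<in> P"
proof (induct n)
  case 0
  then show ?case using prime_ne by auto
next
  case (Suc n)
  then have "r * r ^ n \<in> P" by simp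
  moreover have "r ^ n \<in> R" using Suc sr_pow by blast
  ultimately show ?case using Suc unfolding prime_ideal_def by blast
qed
lemma radical_sub_prime: "is_subring R \<Longrightarrow> prime_ideal R P \<Longrightarrow> I \<subseteq> P \<Longrightarrow> radical R I \<subseteq> P"
  unfolding radical_def using prime_pow by blast
lemma sub_radical: "I \<subseteq> R \<Longrightarrow> I \<subseteq> radical R I"
  unfolding radical_def by (auto intro: exI[of _ 1])

definition addI :: "'a::comm_ring_1 set \<Rightarrow> 'a set \<Rightarrow> 'a \<Rightarrow> 'a set" where
  "addI R M a = {m + r * a | m r. m \<in> M \<and> r \<in> R}"

lemma addI_ideal:
  assumes R: "is_subring R" and M: "is_ideal R M" and a: "a \<in> R"
  shows "is_ideal R (addI R M a)" "M \<subseteq> addI R M a" "a \<in> addI R M a"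
proof -
  have "addI R M a \<subseteq> R" using R M a unfolding addI_def by (auto intro: sr_add sr_mult id_sub)
  moreover have "0 \<in> addI R M a" unfolding addI_def using id_zero[OF M] sr_zero[OF R]
    by (auto intro!: exI[of _ 0])
  moreover have "\<forall>p\<in>addI R M a. \<forall>q\<in>addI R M a. p + q \<in> addI R M a"
  proof (intro ballI)
    fix p q assume "p \<in> addI R M a" "q \<in> addI R M a"
    then obtain m r m' r' where "p = m + r * a" "q = m' + r' * a" "m \<in> M" "r \<in> R" "m' \<in> M" "r' \<in> R"
      unfolding addI_def by blast
    moreover have "m + r * a + (m' + r' * a) = (m + m') + (r + r') * a" by (simp add: algebra_simps)
    ultimately show "p + q \<in> addI R M a" unfolding addI_def using id_add[OF M] sr_add[OF R] by blast
  qed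
  moreover have "\<forall>s\<in>R. \<forall>p\<in>addI R M a. s * p \<in> addI R M a"
  proof (intro ballI)
    fix s p assume s: "s \<in> R" and "p \<in> addI R M a"
    then obtain m r where "p = m + r * a" "m \<in> M" "r \<in> R"
      unfolding addI_def by blast
    moreover have "s * (m + r * a) = s * m + (s * r) * a" by (simp add: algebra_simps)
    ultimately show "s * p \<in> addI R M a" unfolding addI_def using id_multl[OF M s] sr_mult[OF R s] by blast
  qed
  ultimately show "is_ideal R (addI R M a)" unfolding is_ideal_def by blast
  show "M \<subseteq> addI R M a"
  proof
    fix m assume m: "m \<in> M"
    have "m = m + 0 * a" by simp
    then show "m \<in> addI R M a" unfolding addI_def using m sr_zero[OF R] by blast
  qed
  have "a = 0 + 1 * a" by simp
  then show "a \<in> addI R M a" unfolding addI_def using sr_one[OF R] id_zero[OF M] by blast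
qed

lemma max_prime:
  assumes R: "is_subring R" and M: "maximal_ideal R M"
  shows "prime_ideal R M"
proof -
  have Mi: "is_ideal R M" and MR: "M \<noteq> R" using M by (auto simp: maximal_ideal_def)
  have "\<forall>a\<in>R. \<forall>b\<in>R. a * b \<in> M \<longrightarrow> a \<in> M \<or> b \<in> M"
  proof (intro ballI impI)
    fix a b assume a: "a \<in> R" and b: "b \<in> R" and ab: "a * b \<in> M"
    show "a \<in> M \<or> b \<in> M"
    proof (cases "a \<in> M")
      case True then show ?thesis by blast
    next
      case False note aM = this
      note A = addI_ideal[OF R Mi a]
      have "addI R M a = R" using M A aM unfolding maximal_ideal_def by blast
      then have "1 \<in> addI R M a" using sr_one[OF R] by simp
      then obtain m r where mr: "1 = m + r * a" "m \<in> M" "r \<in> R" unfolding addI_def by blast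
      have "b = b * (m + r * a)" by (metis mult_1_right mr(1))
      also have "\<dots> = b * m + r * (a * b)" by (simp add: algebra_simps)
      finally have "b = b * m + r * (a * b)" .
      moreover have "b * m \<in> M" using id_multl[OF Mi b mr(2)] .
      moreover have "r * (a * b) \<in> M" using id_multl[OF Mi mr(3) ab] .
      ultimately have "b \<in> M" using id_add[OF Mi] by metis
      then show ?thesis by blast
    qed
  qed
  then show ?thesis using Mi MR by (simp add: prime_ideal_def)
qed

lemma zorn_prime:
  assumes R: "is_subring R" and I: "is_ideal R I" and s: "s \<in> R" and np: "\<forall>n. s ^ n \<notin> I"
  shows "\<exists>P. prime_ideal R P \<and> I \<subseteq> P \<and> s \<notin> P"
proof -
  define F where "F = {K. is_ideal R K \<and> I \<subseteq> K \<and> (\<forall>n. s ^ n \<notin> K)}"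
  have "\<forall>C\<in>chains F. \<exists>U\<in>F. \<forall>X\<in>C. X \<subseteq> U"
  proof
    fix C assume C: "C \<in> chains F"
    show "\<exists>U\<in>F. \<forall>X\<in>C. X \<subseteq> U"
    proof (cases "C = {}")
      case True then show ?thesis using I np by (auto simp: F_def)
    next
      case False
      have Csub: "C \<subseteq> F" and ch: "\<forall>A\<in>C. \<forall>B\<in>C. A \<subseteq> B \<or> B \<subseteq> A"
        using C by (auto simp: chains_def chain_subset_def)
      have "\<Union>C \<subseteq> R" using Csub by (auto simp: F_def is_ideal_def)
      moreover have "0 \<in> \<Union>C" using Csub False by (auto simp: F_def is_ideal_def)
      moreover have "\<forall>a\<in>\<Union>C. \<forall>b\<in>\<Union>C. a + b \<in> \<Union>C"
      proof (intro ballI)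
        fix a b assume "a \<in> \<Union>C" "b \<in> \<Union>C"
        then obtain A B where AB: "A \<in> C" "B \<in> C" "a \<in> A" "b \<in> B" by auto
        show "a + b \<in> \<Union>C"
        proof (cases "A \<subseteq> B")
          case True
          then have "a + b \<in> B" using AB Csub id_add[of R B a b] by (auto simp: F_def)
          then show ?thesis using AB by auto
        next
          case False
          then have "B \<subseteq> A" using ch AB by blast
          then have "a + b \<in> A" using AB Csub id_add[of R A a b] by (auto simp: F_def)
          then show ?thesis using AB by auto
        qed
      qed
      moreover have "\<forall>r\<in>R. \<forall>a\<in>\<Union>C. r * a \<in> \<Union>C"
      proof (intro ballI)
        fix r a assume r: "r \<in> R" and "a \<in> \<Union>C"
        then obtain A where A: "A \<in> C" "a \<in> A" by auto
        then have "r * a \<in> A" using Csub id_multl[of R A r a] r by (auto simp: F_def)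
        then show "r * a \<in> \<Union>C" using A by auto
      qed
      ultimately have "is_ideal R (\<Union>C)" unfolding is_ideal_def by blast
      moreover have "I \<subseteq> \<Union>C" using Csub False by (auto simp: F_def)
      moreover have "\<forall>n. s ^ n \<notin> \<Union>C" using Csub by (auto simp: F_def)
      ultimately have "\<Union>C \<in> F" by (simp add: F_def)
      then show ?thesis by auto
    qed
  qed
  from Zorn_Lemma2[OF this] obtain P where P: "P \<in> F" and Pmax: "\<forall>X\<in>F. P \<subseteq> X \<longrightarrow> X = P"
    by blast
  have Pi: "is_ideal R P" and IP: "I \<subseteq> P" and Pn: "\<forall>n. s ^ n \<notin> P" using P by (auto simp: F_def)
  have sP: "s \<notin> P" using Pn[rule_format, of 1] by simp
  have notin: "\<exists>n. s ^ n \<in> addI R P a" if a: "a \<in> R" "a \<notin> P" for a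
  proof (rule ccontr)
    assume nn: "\<not> (\<exists>n. s ^ n \<in> addI R P a)"
    note A = addI_ideal[OF R Pi a(1)]
    then have "addI R P a \<in> F" using IP nn by (auto simp: F_def)
    then have "addI R P a = P" using Pmax A by blast
    then show False using A a by auto
  qed
  have "\<forall>a\<in>R. \<forall>b\<in>R. a * b \<in> P \<longrightarrow> a \<in> P \<or> b \<in> P"
  proof (intro ballI impI)
    fix a b assume a: "a \<in> R" and b: "b \<in> R" and ab: "a * b \<in> P"
    show "a \<in> P \<or> b \<in> P"
    proof (rule ccontr)
      assume "\<not> (a \<in> P \<or> b \<in> P)"
      then obtain n l where n: "s ^ n \<in> addI R P a" and l: "s ^ l \<in> addI R P b"
        using notin a b by blast
      obtain m1 r1 where 1: "s ^ n = m1 + r1 * a" "m1 \<in> P" "r1 \<in> R" using n unfolding addI_def by blast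
      obtain m2 r2 where 2: "s ^ l = m2 + r2 * b" "m2 \<in> P" "r2 \<in> R" using l unfolding addI_def by blast
      have "s ^ (n + l) = m1 * m2 + m1 * (r2 * b) + (r1 * a) * m2 + (r1 * r2) * (a * b)"
        by (simp add: power_add 1 2 algebra_simps)
      moreover have "m1 * m2 \<in> P" using id_multl[OF Pi id_sub[OF Pi 1(2)] 2(2)] .
      moreover have "m1 * (r2 * b) \<in> P" using id_multr[OF Pi sr_mult[OF R 2(3) b] 1(2)] .
      moreover have "(r1 * a) * m2 \<in> P" using id_multl[OF Pi sr_mult[OF R 1(3) a] 2(2)] .
      moreover have "(r1 * r2) * (a * b) \<in> P" using id_multl[OF Pi sr_mult[OF R 1(3) 2(3)] ab] .
      ultimately have "s ^ (n + l) \<in> P" using id_add[OF Pi] by presburger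
      then show False using Pn by blast
    qed
  qed
  moreover have "P \<noteq> R" using sP s by auto
  ultimately have "prime_ideal R P" using Pi by (simp add: prime_ideal_def)
  then show ?thesis using IP sP by blast
qed

lemma loc_sub:
  assumes R: "is_subring R" and P: "prime_ideal R P"
    and u: "u \<in> R - P" and v: "v \<in> R - P" and w: "w \<in> R - P" and eq: "w * (a * v - b * u) = 0"
  shows "loc_class R P S (a, u) \<subseteq> loc_class R P S (b, v)"
proof
  fix z assume "z \<in> loc_class R P S (a, u)"
  then obtain c t w1 where z: "z = (c, t)" "c \<in> S" "t \<in> R - P" "w1 \<in> R - P" "w1 * (a * t - c * u) = 0"
    by (cases z) (auto simp: loc_class_def)
  have W: "w * w1 * u \<in> R - P" using prime_mult[OF P] R w z(4) u by blast
  have "w * w1 * u * (b * t - c * v) = w * v * (w1 * (a * t - c * u)) - w1 * t * (w * (a * v - b * u))"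
    by (simp add: algebra_simps)
  then have "w * w1 * u * (b * t - c * v) = 0" using eq z(5) by simp
  then show "z \<in> loc_class R P S (b, v)" using z W by (auto simp: loc_class_def)
qed

lemma loc_eq:
  assumes R: "is_subring R" and P: "prime_ideal R P"
    and u: "u \<in> R - P" and v: "v \<in> R - P" and w: "w \<in> R - P" and eq: "w * (a * v - b * u) = 0"
  shows "loc_class R P S (a, u) = loc_class R P S (b, v)"
proof
  show "loc_class R P S (a, u) \<subseteq> loc_class R P S (b, v)" using loc_sub[OF assms] .
  have "w * (b * u - a * v) = 0" using eq by (simp add: algebra_simps)
  then show "loc_class R P S (b, v) \<subseteq> loc_class R P S (a, u)" using loc_sub[OF R P v u w] by blast
qed

lemma loc_notin:
  assumes R: "is_subring R" and P: "prime_ideal R P" and x: "x \<in> S"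
    and col: "colon_elt R x \<subseteq> P"
  shows "loc_class R P S (x, 1) \<notin> localize R P S R"
proof
  have 1: "1 \<in> R - P" using prime_one[OF R P] .
  assume "loc_class R P S (x, 1) \<in> localize R P S R"
  then obtain r u where ru: "r \<in> R" "u \<in> R - P" "loc_class R P S (x, 1) = loc_class R P S (r, u)"
    by (auto simp: localize_def)
  have "(x, 1) \<in> loc_class R P S (x, 1)" using x 1 by (auto simp: loc_class_def)
  then have mem: "(x, 1) \<in> loc_class R P S (r, u)" using ru(3) by metis
  then obtain w where w: "w \<in> R - P" "w * (r - x * u) = 0" by (auto simp: loc_class_def)
  have "(w * u) * x = w * r" using w(2) by (simp add: algebra_simps)
  then have "w * u \<in> colon_elt R x" using sr_mult[OF R] w ru by (auto simp: colon_elt_def)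
  then have "w * u \<in> P" using col by auto
  then show False using prime_mult[OF P w(1) ru(2) R] by auto
qed

lemma loc_in:
  assumes R: "is_subring R" and P: "prime_ideal R P" and x: "x \<in> S"
    and eqloc: "localize R P S R = localize R P S S"
  shows "\<exists>v\<in>R - P. v * x \<in> R"
proof -
  have 1: "1 \<in> R - P" using prime_one[OF R P] .
  have "loc_class R P S (x, 1) \<in> localize R P S S" using x 1 by (auto simp: localize_def)
  then have "loc_class R P S (x, 1) \<in> localize R P S R" using eqloc by simp
  then obtain r u where ru: "r \<in> R" "u \<in> R - P" "loc_class R P S (x, 1) = loc_class R P S (r, u)"
    by (auto simp: localize_def)
  have "(x, 1) \<in> loc_class R P S (x, 1)" using x 1 by (auto simp: loc_class_def)
  then have mem: "(x, 1) \<in> loc_class R P S (r, u)" using ru(3) by metis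
  then obtain w where w: "w \<in> R - P" "w * (r - x * u) = 0" by (auto simp: loc_class_def)
  have "(w * u) * x = w * r" using w(2) by (simp add: algebra_simps)
  moreover have "w * u \<in> R - P" using prime_mult[OF P w(1) ru(2) R] .
  moreover have "w * r \<in> R" using sr_mult[OF R] w ru by auto
  ultimately show ?thesis by metis
qed

lemma common_denom:
  fixes d :: nat and g :: "nat \<Rightarrow> 'a::comm_ring_1"
  assumes R: "is_subring R" and P: "prime_ideal R P"
  shows "(\<forall>i<d. \<exists>v\<in>R-P. v * g i \<in> R) \<Longrightarrow> \<exists>e\<in>R-P. \<forall>i<d. e * g i \<in> R"
proof (induct d)
  case 0 then show ?case using prime_one[OF R P] by auto
next
  case (Suc d)
  then obtain e where e: "e \<in> R - P" "\<forall>i<d. e * g i \<in> R" by auto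
  obtain v where v: "v \<in> R - P" "v * g d \<in> R" using Suc.prems by auto
  have ev: "e * v \<in> R - P" using prime_mult[OF P e(1) v(1) R] .
  have "\<forall>i<Suc d. (e * v) * g i \<in> R"
  proof (intro allI impI)
    fix i assume "i < Suc d"
    then consider "i < d" | "i = d" by linarith
    then show "(e * v) * g i \<in> R"
    proof cases
      case 1
      then have "v * (e * g i) \<in> R" using sr_mult[OF R] v e by auto
      then show ?thesis by (simp add: ac_simps)
    next
      case 2
      then have "e * (v * g d) \<in> R" using sr_mult[OF R] v e by auto
      then show ?thesis using 2 by (simp add: ac_simps)
    qed
  qed
  then show ?case using ev by blast
qed

lemma adj_sub: "is_subring T \<Longrightarrow> insert x R \<subseteq> T \<Longrightarrow> ring_adj R x \<subseteq> T"
  by (auto simp: ring_adj_def)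
lemma adj_contains: "insert x R \<subseteq> ring_adj R x"
  by (auto simp: ring_adj_def)
lemma adj_subring: "is_subring (ring_adj R x)"
  by (auto simp: is_subring_def ring_adj_def)

lemma colon_ideal: "is_subring R \<Longrightarrow> is_ideal R (colon_elt R x)"
  unfolding is_ideal_def colon_elt_def
  by (auto simp: distrib_right mult.assoc intro: sr_add sr_mult sr_zero)

lemma conductor_ideal: "is_subring R \<Longrightarrow> is_ideal R (conductor R T)"
  unfolding is_ideal_def conductor_def
  by (auto simp: distrib_right mult.assoc intro: sr_add sr_mult sr_zero)

fun mspan :: "'a::comm_ring_1 set \<Rightarrow> (nat \<Rightarrow> 'a) \<Rightarrow> nat \<Rightarrow> 'a set" where
  "mspan R g 0 = {0}"
| "mspan R g (Suc k) = {m + c * g k | m c. m \<in> mspan R g k \<and> c \<in> R}"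

lemma mspan_Suc_iff: "z \<in> mspan R g (Suc k) \<longleftrightarrow> (\<exists>m c. z = m + c * g k \<and> m \<in> mspan R g k \<and> c \<in> R)"
  by auto

lemma mspan_zero: "is_subring R \<Longrightarrow> 0 \<in> mspan R g k"
proof (induct k)
  case 0 then show ?case by simp
next
  case (Suc k)
  have "(0::'a) = 0 + 0 * g k" by simp
  then show ?case using Suc sr_zero[OF Suc.prems] unfolding mspan_Suc_iff by blast
qed

lemma mspan_add: "is_subring R \<Longrightarrow> m1 \<in> mspan R g k \<Longrightarrow> m2 \<in> mspan R g k \<Longrightarrow> m1 + m2 \<in> mspan R g k"
proof (induct k arbitrary: m1 m2)
  case 0 then show ?case by simp
next
  case (Suc k)
  obtain a c where 1: "m1 = a + c * g k" "a \<in> mspan R g k" "c \<in> R" using Suc.prems unfolding mspan_Suc_iff by blast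
  obtain a' c' where 2: "m2 = a' + c' * g k" "a' \<in> mspan R g k" "c' \<in> R" using Suc.prems unfolding mspan_Suc_iff by blast
  have "m1 + m2 = (a + a') + (c + c') * g k" using 1 2 by (simp add: algebra_simps)
  moreover have "a + a' \<in> mspan R g k" using Suc 1 2 by blast
  moreover have "c + c' \<in> R" using sr_add[OF Suc.prems(1) 1(3) 2(3)] .
  ultimately show ?case unfolding mspan_Suc_iff by blast
qed

lemma mspan_scal: "is_subring R \<Longrightarrow> r \<in> R \<Longrightarrow> m \<in> mspan R g k \<Longrightarrow> r * m \<in> mspan R g k"
proof (induct k arbitrary: m)
  case 0 then show ?case by simp
next
  case (Suc k)
  obtain a c where 1: "m = a + c * g k" "a \<in> mspan R g k" "c \<in> R" using Suc.prems unfolding mspan_Suc_iff by blast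
  have "r * m = r * a + (r * c) * g k" using 1 by (simp add: algebra_simps)
  moreover have "r * a \<in> mspan R g k" using Suc 1 by blast
  moreover have "r * c \<in> R" using sr_mult[OF Suc.prems(1) Suc.prems(2) 1(3)] .
  ultimately show ?case unfolding mspan_Suc_iff by blast
qed

lemma mspan_gen: "is_subring R \<Longrightarrow> j < k \<Longrightarrow> g j \<in> mspan R g k"
proof (induct k)
  case 0 then show ?case by simp
next
  case (Suc k)
  show ?case
  proof (cases "j = k")
    case True
    have "g k = 0 + 1 * g k" by simp
    then show ?thesis using True mspan_zero[OF Suc.prems(1)] sr_one[OF Suc.prems(1)] unfolding mspan_Suc_iff by blast
  next
    case False
    then have "g j \<in> mspan R g k" using Suc by auto
    moreover have "g j = g j + 0 * g k" by simp
    ultimately show ?thesis using sr_zero[OF Suc.prems(1)] unfolding mspan_Suc_iff by blast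
  qed
qed

lemma mspan_sum: "is_subring R \<Longrightarrow> (\<And>i. i \<in> A \<Longrightarrow> f i \<in> mspan R g k) \<Longrightarrow> sum f A \<in> mspan R g k"
  by (induct A rule: infinite_finite_induct) (auto simp: mspan_zero mspan_add)

lemma mspan_img: "m \<in> mspan R g k \<Longrightarrow> u * m \<in> mspan R (\<lambda>j. u * g j) k"
proof (induct k arbitrary: m)
  case 0 then show ?case by simp
next
  case (Suc k)
  obtain a c where 1: "m = a + c * g k" "a \<in> mspan R g k" "c \<in> R" using Suc.prems unfolding mspan_Suc_iff by blast
  have "u * m = u * a + c * (u * g k)" using 1 by (simp add: algebra_simps)
  moreover have "u * a \<in> mspan R (\<lambda>j. u * g j) k" using Suc 1 by blast
  ultimately show ?case using 1(3) unfolding mspan_Suc_iff by blast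
qed

lemma mspan_kill: "is_subring R \<Longrightarrow> (\<forall>j<k. e * g j \<in> R) \<Longrightarrow> m \<in> mspan R g k \<Longrightarrow> e * m \<in> R"
proof (induct k arbitrary: m)
  case 0 then show ?case using sr_zero by auto
next
  case (Suc k)
  obtain a c where 1: "m = a + c * g k" "a \<in> mspan R g k" "c \<in> R" using Suc.prems unfolding mspan_Suc_iff by blast
  have "e * m = e * a + c * (e * g k)" using 1 by (simp add: algebra_simps)
  moreover have "e * a \<in> R" using Suc 1 by auto
  moreover have "c * (e * g k) \<in> R" using Suc.prems 1 sr_mult by auto
  ultimately show ?case using sr_add[OF Suc.prems(1)] by metis
qed

lemma mspan_closed:
  assumes "0 \<in> Z" "\<And>m1 m2. m1 \<in> Z \<Longrightarrow> m2 \<in> Z \<Longrightarrow> m1 + m2 \<in> Z"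
    "\<And>r m. r \<in> R \<Longrightarrow> m \<in> Z \<Longrightarrow> r * m \<in> Z"
  shows "(\<forall>j<k. g j \<in> Z) \<Longrightarrow> mspan R g k \<subseteq> Z"
proof (induct k)
  case 0 then show ?case using assms by simp
next
  case (Suc k)
  then have "mspan R g k \<subseteq> Z" by auto
  then show ?case using Suc.prems assms(2,3) unfolding mspan_Suc_iff by auto
qed

lemma one_minus_mult: "(1 - a * p) * (1 - a * q) = 1 - a * (p + q - a * p * q)" for a p q :: "'a::comm_ring_1"
  by (simp add: algebra_simps)

lemma nak_alg:
  fixes gi ri a mi ci G u rd md cd :: "'a::comm_ring_1"
  assumes h1: "gi = ri + a * (mi + ci * G)" and h2: "u * G = rd + a * md" and h3: "u = 1 - a * cd"
  shows "u * gi = (u * u * ri + a * ci * u * rd) + a * (u * (u * mi) + (a * ci) * (u * md) + cd * (u * gi))"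
proof -
  have e1: "u * gi = u * ri + a * (u * mi) + a * ci * (u * G)"
    using arg_cong[OF h1, of "\<lambda>z. u * z"] by (simp add: algebra_simps)
  have e2: "u * gi = u * ri + a * (u * mi) + a * ci * (rd + a * md)" using e1 unfolding h2 .
  have "(u * u * ri + a * ci * u * rd) + a * (u * (u * mi) + (a * ci) * (u * md) + cd * (u * gi))
      = u * (u * ri + a * (u * mi) + a * ci * (rd + a * md)) + a * cd * (u * gi)"
    by (simp add: algebra_simps)
  also have "\<dots> = u * (u * gi) + a * cd * (u * gi)" unfolding e2 ..
  also have "\<dots> = (u + a * cd) * (u * gi)" by (simp add: algebra_simps)
  also have "u + a * cd = 1" using h3 by simp
  finally show ?thesis by simp
qed

lemma nak_alg2:
  fixes G rd a md cd :: "'a::comm_ring_1"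
  assumes h: "G = rd + a * (md + cd * G)"
  shows "(1 - a * cd) * G = rd + a * md"
proof -
  have "(1 - a * cd) * G = G - a * cd * G" by (simp add: algebra_simps)
  also have "\<dots> = (rd + a * (md + cd * G)) - a * cd * G" using arg_cong[OF h, of "\<lambda>z. z - a * cd * G"] .
  also have "\<dots> = rd + a * md" by (simp add: algebra_simps)
  finally show ?thesis .
qed

lemma nakayama:
  fixes d :: nat and g :: "nat \<Rightarrow> 'a::comm_ring_1"
  assumes R: "is_subring R" and a: "a \<in> R"
  shows "(\<forall>i<d. \<exists>\<rho>\<in>R. \<exists>m\<in>mspan R g d. g i = \<rho> + a * m) \<Longrightarrow> \<exists>c\<in>R. \<forall>i<d. (1 - a * c) * g i \<in> R"
proof (induct d arbitrary: g)
  case 0 then show ?case using sr_zero[OF R] by auto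
next
  case (Suc d)
  have hyp: "\<exists>\<rho>\<in>R. \<exists>m c. m \<in> mspan R g d \<and> c \<in> R \<and> g i = \<rho> + a * (m + c * g d)" if iS: "i < Suc d" for i
  proof -
    obtain \<rho> m where A: "\<rho> \<in> R" "m \<in> mspan R g (Suc d)" "g i = \<rho> + a * m" using Suc.prems[rule_format, OF iS] by blast
    then obtain m' c where B: "m = m' + c * g d" "m' \<in> mspan R g d" "c \<in> R" unfolding mspan_Suc_iff by blast
    show ?thesis using A B by (intro bexI[of _ \<rho>] exI[of _ m'] exI[of _ c]) auto
  qed
  obtain rd md cd where d: "rd \<in> R" "md \<in> mspan R g d" "cd \<in> R" "g d = rd + a * (md + cd * g d)"
    using hyp[of d] by blast
  define u where "u = 1 - a * cd"
  have uR: "u \<in> R" unfolding u_def by (intro sr_diff[OF R] sr_mult[OF R] sr_one[OF R] a d(3))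
  have ugd: "u * g d = rd + a * md" unfolding u_def using nak_alg2[OF d(4)] .
  define h where "h = (\<lambda>j. u * g j)"
  have hmd: "u * md \<in> mspan R h d" unfolding h_def using mspan_img[OF d(2)] .
  have hh: "\<forall>i<d. \<exists>\<rho>\<in>R. \<exists>m\<in>mspan R h d. h i = \<rho> + a * m"
  proof (intro allI impI)
    fix i assume i: "i < d"
    obtain ri mi ci where di: "ri \<in> R" "mi \<in> mspan R g d" "ci \<in> R" "g i = ri + a * (mi + ci * g d)"
      using hyp[of i] i by auto
    have m1: "u * (u * mi) \<in> mspan R h d"
      using mspan_scal[OF R uR] mspan_img[OF di(2), of u] unfolding h_def by blast
    have m2: "(a * ci) * (u * md) \<in> mspan R h d"
      using mspan_scal[OF R sr_mult[OF R a di(3)] hmd] .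
    have m3: "cd * (u * g i) \<in> mspan R h d"
      using mspan_scal[OF R d(3) mspan_gen[OF R i, of h]] unfolding h_def by simp
    have rho: "u * u * ri + a * ci * u * rd \<in> R"
      by (intro sr_add[OF R] sr_mult[OF R] uR a di(1,3) d(1))
    have eq: "h i = (u * u * ri + a * ci * u * rd) + a * (u * (u * mi) + (a * ci) * (u * md) + cd * (u * g i))"
      unfolding h_def using nak_alg[OF di(4) ugd u_def] .
    have "u * (u * mi) + (a * ci) * (u * md) + cd * (u * g i) \<in> mspan R h d"
      using m1 m2 m3 mspan_add[OF R] by blast
    then show "\<exists>\<rho>\<in>R. \<exists>m\<in>mspan R h d. h i = \<rho> + a * m" using eq rho by blast
  qed
  obtain c' where c': "c' \<in> R" "\<forall>i<d. (1 - a * c') * h i \<in> R" using Suc.hyps[OF hh] by blast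
  define C1 where "C1 = c' + cd - a * c' * cd"
  define C where "C = C1 + cd - a * C1 * cd"
  have C1R: "C1 \<in> R" unfolding C1_def by (intro sr_add[OF R] sr_diff[OF R] sr_mult[OF R] a c'(1) d(3))
  have CR: "C \<in> R" unfolding C_def by (intro sr_add[OF R] sr_diff[OF R] sr_mult[OF R] a C1R d(3))
  have Ceq: "1 - a * C = (1 - a * c') * u * u"
    unfolding C_def C1_def u_def by (simp add: algebra_simps)
  have kill: "(1 - a * c') * (u * md) \<in> R" using mspan_kill[OF R c'(2) hmd] .
  have "\<forall>i<Suc d. (1 - a * C) * g i \<in> R"
  proof (intro allI impI)
    fix i assume "i < Suc d"
    then consider "i < d" | "i = d" by linarith
    then show "(1 - a * C) * g i \<in> R"
    proof cases
      case 1
      have "(1 - a * C) * g i = u * ((1 - a * c') * h i)" unfolding Ceq h_def by (simp add: ac_simps)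
      then show ?thesis using sr_mult[OF R uR] c'(2) 1 by metis
    next
      case 2
      have "(1 - a * C) * g d = (1 - a * c') * u * (u * g d)" unfolding Ceq by (simp add: ac_simps)
      also have "\<dots> = (1 - a * c') * u * rd + a * ((1 - a * c') * (u * md))" unfolding ugd by (simp add: algebra_simps)
      finally have "(1 - a * C) * g d = (1 - a * c') * u * rd + a * ((1 - a * c') * (u * md))" .
      moreover have "(1 - a * c') * u * rd \<in> R" by (intro sr_diff[OF R] sr_mult[OF R] sr_one[OF R] a c'(1) uR d(1))
      moreover have "a * ((1 - a * c') * (u * md)) \<in> R" using sr_mult[OF R a kill] .
      ultimately show ?thesis using 2 sr_add[OF R] by metis
    qed
  qed
  then show ?case using CR by blast
qed

lemma adj_in_span:
  assumes R: "is_subring R" and p: "lead_coeff p = 1" "\<forall>i. coeff p i \<in> R" "poly p x = 0"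
  shows "ring_adj R x \<subseteq> mspan R (\<lambda>j. x ^ j) (degree p)"
proof -
  define d where "d = degree p"
  define G where "G = mspan R (\<lambda>j. x ^ j) d"
  have "0 = (\<Sum>i\<le>d. coeff p i * x ^ i)" using p(3) poly_altdef d_def by metis
  also have "\<dots> = (\<Sum>i<d. coeff p i * x ^ i) + x ^ d"
    using p(1) d_def by (simp add: lessThan_Suc_atMost[symmetric])
  finally have "(\<Sum>i<d. coeff p i * x ^ i) + x ^ d = 0" by simp
  then have "x ^ d = - (\<Sum>i<d. coeff p i * x ^ i)" by (simp add: add_eq_0_iff)
  also have "\<dots> = (\<Sum>i<d. (- coeff p i) * x ^ i)" by (simp add: sum_negf)
  finally have xd_eq: "x ^ d = (\<Sum>i<d. (- coeff p i) * x ^ i)" .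
  have "(\<Sum>i<d. (- coeff p i) * x ^ i) \<in> G" unfolding G_def
  proof (rule mspan_sum[OF R])
    fix i assume "i \<in> {..<d}"
    then have "x ^ i \<in> mspan R (\<lambda>j. x ^ j) d" using mspan_gen[OF R, of i d "\<lambda>j. x ^ j"] by simp
    then show "(- coeff p i) * x ^ i \<in> mspan R (\<lambda>j. x ^ j) d"
      using mspan_scal[OF R sr_neg[OF R p(2)[rule_format, of i]]] by blast
  qed
  then have xd: "x ^ d \<in> G" using xd_eq by simp
  have dpos: "0 < d"
  proof (rule ccontr)
    assume "\<not> 0 < d"
    then have "d = 0" by simp
    then show False using xd unfolding G_def by simp
  qed
  have gen: "x ^ j \<in> G" if "j < d" for j unfolding G_def using mspan_gen[OF R that, of "\<lambda>j. x ^ j"] by simp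
  have xG: "x * m \<in> G" if "m \<in> G" for m
  proof -
    have "G \<subseteq> {m. x * m \<in> G}" unfolding G_def
    proof (rule mspan_closed)
      show "0 \<in> {m. x * m \<in> mspan R (\<lambda>j. x ^ j) d}" using mspan_zero[OF R] by simp
      show "m1 + m2 \<in> {m. x * m \<in> mspan R (\<lambda>j. x ^ j) d}"
        if "m1 \<in> {m. x * m \<in> mspan R (\<lambda>j. x ^ j) d}" "m2 \<in> {m. x * m \<in> mspan R (\<lambda>j. x ^ j) d}" for m1 m2
        using that mspan_add[OF R] by (simp add: distrib_left)
      show "r * m \<in> {m. x * m \<in> mspan R (\<lambda>j. x ^ j) d}"
        if "r \<in> R" "m \<in> {m. x * m \<in> mspan R (\<lambda>j. x ^ j) d}" for r m
        using that mspan_scal[OF R, of r "x * m"] by (simp add: mult.left_commute)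
      show "\<forall>j<d. x ^ j \<in> {m. x * m \<in> mspan R (\<lambda>j. x ^ j) d}"
      proof (intro allI impI)
        fix j assume j: "j < d"
        show "x ^ j \<in> {m. x * m \<in> mspan R (\<lambda>j. x ^ j) d}"
        proof (cases "Suc j < d")
          case True then show ?thesis using gen[of "Suc j"] unfolding G_def by simp
        next
          case False then have "Suc j = d" using j by simp
          then show ?thesis using xd unfolding G_def by (metis mem_Collect_eq power_Suc)
        qed
      qed
    qed
    then show ?thesis using that by blast
  qed
  have powG: "x ^ n * m \<in> G" if "m \<in> G" for n m
    using that by (induct n) (auto simp: mult.assoc xG)
  have multG: "m1 * m2 \<in> G" if m1: "m1 \<in> G" and m2: "m2 \<in> G" for m1 m2
  proof -
    have "G \<subseteq> {m. m1 * m \<in> G}" unfolding G_def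
    proof (rule mspan_closed)
      show "0 \<in> {m. m1 * m \<in> mspan R (\<lambda>j. x ^ j) d}" using mspan_zero[OF R] by simp
      show "a + b \<in> {m. m1 * m \<in> mspan R (\<lambda>j. x ^ j) d}"
        if "a \<in> {m. m1 * m \<in> mspan R (\<lambda>j. x ^ j) d}" "b \<in> {m. m1 * m \<in> mspan R (\<lambda>j. x ^ j) d}" for a b
        using that mspan_add[OF R] by (simp add: distrib_left)
      show "r * m \<in> {m. m1 * m \<in> mspan R (\<lambda>j. x ^ j) d}"
        if "r \<in> R" "m \<in> {m. m1 * m \<in> mspan R (\<lambda>j. x ^ j) d}" for r m
        using that mspan_scal[OF R, of r "m1 * m"] by (simp add: mult.left_commute)
      show "\<forall>j<d. x ^ j \<in> {m. m1 * m \<in> mspan R (\<lambda>j. x ^ j) d}"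
        using powG[OF m1] unfolding G_def by (simp add: mult.commute)
    qed
    then show ?thesis using m2 by blast
  qed
  have oneG: "1 \<in> G" using gen[OF dpos] by simp
  have addG: "m1 + m2 \<in> G" if "m1 \<in> G" "m2 \<in> G" for m1 m2
    using that mspan_add[OF R] unfolding G_def by blast
  have diffG: "m1 - m2 \<in> G" if "m1 \<in> G" "m2 \<in> G" for m1 m2
  proof -
    have "(- 1) * m2 \<in> G" using that mspan_scal[OF R sr_neg[OF R sr_one[OF R]]] unfolding G_def by blast
    then have "m1 + (- 1) * m2 \<in> G" using addG that by blast
    then show ?thesis by simp
  qed
  have "is_subring G" unfolding is_subring_def using oneG addG diffG multG by simp
  moreover have "insert x R \<subseteq> G"
  proof
    fix z assume "z \<in> insert x R"
    then consider "z = x" | "z \<in> R" by blast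
    then show "z \<in> G"
    proof cases
      case 1 then show ?thesis using xG[OF oneG] by simp
    next
      case 2 then show ?thesis using mspan_scal[OF R 2 oneG[unfolded G_def]] unfolding G_def by simp
    qed
  qed
  ultimately show ?thesis using adj_sub unfolding G_def d_def by blast
qed

lemma key:
  assumes R: "is_subring R" and S: "is_subring S" and RS: "R \<subseteq> S" and int: "integral_ext R S"
    and fcp: "FCP R S" and x: "x \<in> S" and a: "a \<in> R"
  shows "\<exists>k. \<exists>c\<in>R. (1 - a * c) * a ^ k * x \<in> R"
proof -
  define T where "T = ring_adj R x"
  have Tsr: "is_subring T" unfolding T_def by (rule adj_subring)
  have RT: "R \<subseteq> T" and xT: "x \<in> T" using adj_contains[of x R] unfolding T_def by auto
  have TS: "T \<subseteq> S" unfolding T_def using adj_sub[OF S] RS x by auto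
  obtain p where p: "lead_coeff p = 1" "\<forall>i. coeff p i \<in> R" "poly p x = 0"
    using int x unfolding integral_ext_def by blast
  define d where "d = degree p"
  have TG: "T \<subseteq> mspan R (\<lambda>j. x ^ j) d" unfolding T_def d_def by (rule adj_in_span[OF R p])
  have aT: "a \<in> T" using a RT by auto
  define V where "V k = {r + a ^ k * t | r t. r \<in> R \<and> t \<in> T}" for k
  have mem: "r + a ^ k * t \<in> V k" if "r \<in> R" "t \<in> T" for r t k using that unfolding V_def by blast
  have Vint: "V k \<in> intermediate_rings R S" for k
  proof -
    have akT: "a ^ k \<in> T" using sr_pow[OF Tsr aT] .
    have ops: "p + q \<in> V k \<and> p - q \<in> V k \<and> p * q \<in> V k" if pV: "p \<in> V k" "q \<in> V k" for p q
    proof -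
      obtain r t r' t' where pq: "p = r + a ^ k * t" "q = r' + a ^ k * t'" "r \<in> R" "t \<in> T" "r' \<in> R" "t' \<in> T"
        using pV unfolding V_def by blast
      have rT: "r \<in> T" "r' \<in> T" using pq RT by auto
      have e1: "p + q = (r + r') + a ^ k * (t + t')" using pq by (simp add: algebra_simps)
      have e2: "p - q = (r - r') + a ^ k * (t - t')" using pq by (simp add: algebra_simps)
      have e3: "p * q = (r * r') + a ^ k * (r * t' + r' * t + a ^ k * t * t')" using pq by (simp add: algebra_simps)
      have T3: "r * t' + r' * t + a ^ k * t * t' \<in> T"
        by (intro sr_add[OF Tsr] sr_mult[OF Tsr] rT pq(4,6) akT)
      have "p + q \<in> V k" using mem[OF sr_add[OF R pq(3) pq(5)] sr_add[OF Tsr pq(4) pq(6)]] e1 by simp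
      moreover have "p - q \<in> V k" using mem[OF sr_diff[OF R pq(3) pq(5)] sr_diff[OF Tsr pq(4) pq(6)]] e2 by simp
      moreover have "p * q \<in> V k" using mem[OF sr_mult[OF R pq(3) pq(5)] T3] e3 by simp
      ultimately show ?thesis by blast
    qed
    have "1 \<in> V k" using mem[OF sr_one[OF R] sr_zero[OF Tsr], of k] by simp
    then have "is_subring (V k)" unfolding is_subring_def using ops by blast
    moreover have "R \<subseteq> V k"
    proof
      fix r assume "r \<in> R" then show "r \<in> V k" using mem[of r 0 k] sr_zero[OF Tsr] by simp
    qed
    moreover have "V k \<subseteq> S"
    proof
      fix z assume "z \<in> V k"
      then obtain r t where "z = r + a ^ k * t" "r \<in> R" "t \<in> T" unfolding V_def by blast
      then show "z \<in> S" using RS TS akT sr_add[OF S] sr_mult[OF S] by blast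
    qed
    ultimately show ?thesis unfolding intermediate_rings_def by blast
  qed
  have Vdec: "V (Suc k) \<subseteq> V k" for k
  proof
    fix z assume "z \<in> V (Suc k)"
    then obtain r t where rt: "z = r + a ^ Suc k * t" "r \<in> R" "t \<in> T" unfolding V_def by blast
    then have "z = r + a ^ k * (a * t)" by (simp add: ac_simps)
    moreover have "a * t \<in> T" using sr_mult[OF Tsr aT rt(3)] .
    ultimately show "z \<in> V k" using mem rt(2) by blast
  qed
  have Vanti: "V l \<subseteq> V k" if "k \<le> l" for k l
    using lift_Suc_antimono_le[of V, OF Vdec that] .
  have "finite (range V)"
  proof -
    have "range V \<subseteq> intermediate_rings R S" using Vint by blast
    moreover have "\<forall>A\<in>range V. \<forall>B\<in>range V. A \<subseteq> B \<or> B \<subseteq> A"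
      using Vanti nat_le_linear by blast
    ultimately show ?thesis using fcp unfolding FCP_def by blast
  qed
  obtain k where Vk: "V (Suc k) = V k"
  proof (rule ccontr)
    assume "\<not> thesis"
    then have ne: "V (Suc k) \<noteq> V k" for k using that by blast
    have neq: "V l \<noteq> V k" if "k < l" for k l
    proof
      assume eq: "V l = V k"
      have "V l \<subseteq> V (Suc k)" using Vanti that by simp
      then have "V k \<subseteq> V (Suc k)" using eq by simp
      then show False using Vdec ne by blast
    qed
    have "inj V"
    proof (rule injI)
      fix k l assume "V k = V l"
      then show "k = l" using neq by (metis linorder_neqE_nat)
    qed
    then have "finite (UNIV :: nat set)" using finite_imageD \<open>finite (range V)\<close> by blast
    then show False by simp
  qed
  define g where "g = (\<lambda>j. a ^ k * x ^ j)"
  have hyp: "\<forall>i<d. \<exists>\<rho>\<in>R. \<exists>m\<in>mspan R g d. g i = \<rho> + a * m"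
  proof (intro allI impI)
    fix i assume i: "i < d"
    have "x ^ i \<in> T" using sr_pow[OF Tsr xT] .
    then have "g i \<in> V k" using mem[OF sr_zero[OF R], of "x ^ i" k] unfolding g_def by simp
    then have "g i \<in> V (Suc k)" using Vk by simp
    then obtain \<rho> t where rt: "g i = \<rho> + a ^ Suc k * t" "\<rho> \<in> R" "t \<in> T" unfolding V_def by blast
    have "a ^ k * t \<in> mspan R g d" using mspan_img[of t R "\<lambda>j. x ^ j" d "a ^ k"] TG rt(3)
      unfolding g_def by blast
    moreover have "g i = \<rho> + a * (a ^ k * t)" using rt(1) by (simp add: ac_simps)
    ultimately show "\<exists>\<rho>\<in>R. \<exists>m\<in>mspan R g d. g i = \<rho> + a * m" using rt(2) by blast
  qed
  obtain c where c: "c \<in> R" "\<forall>i<d. (1 - a * c) * g i \<in> R" using nakayama[OF R a hyp] by blast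
  have "\<forall>j<d. ((1 - a * c) * a ^ k) * x ^ j \<in> R" using c(2) unfolding g_def by (simp add: mult.assoc)
  from mspan_kill[OF R this] have "((1 - a * c) * a ^ k) * x \<in> R" using TG xT by blast
  then show ?thesis using c(1) by blast
qed

lemma part2:
  assumes R: "is_subring R" and S: "is_subring S" and RS: "R \<subseteq> S" and int: "integral_ext R S"
    and M: "maximal_ideal R M" and cru: "Supp R S = {M}" and x: "x \<in> S" "x \<notin> R"
  shows "M = radical R (colon_elt R x) \<and> M = radical R (conductor R (ring_adj R x))"
proof -
  have Mp: "prime_ideal R M" using max_prime[OF R M] .
  define T where "T = ring_adj R x"
  have xT: "x \<in> T" using adj_contains[of x R] unfolding T_def by auto
  obtain p where p: "lead_coeff p = 1" "\<forall>i. coeff p i \<in> R" "poly p x = 0"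
    using int x unfolding integral_ext_def by blast
  define d where "d = degree p"
  have TG: "T \<subseteq> mspan R (\<lambda>j. x ^ j) d" unfolding T_def d_def by (rule adj_in_span[OF R p])
  have I1: "is_ideal R (colon_elt R x)" using colon_ideal[OF R] .
  have I2: "is_ideal R (conductor R T)" using conductor_ideal[OF R] .
  have sub12: "conductor R T \<subseteq> colon_elt R x" using xT by (auto simp: conductor_def colon_elt_def)
  have colM: "colon_elt R x \<subseteq> M"
  proof -
    have "\<forall>n. (1::'a) ^ n \<notin> colon_elt R x" using x by (simp add: colon_elt_def)
    from zorn_prime[OF R I1 sr_one[OF R] this] obtain P where P: "prime_ideal R P" "colon_elt R x \<subseteq> P"
      by blast
    have "loc_class R P S (x, 1) \<in> localize R P S S" using x prime_one[OF R P(1)]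
      by (auto simp: localize_def)
    moreover have "loc_class R P S (x, 1) \<notin> localize R P S R" using loc_notin[OF R P(1) x(1) P(2)] .
    ultimately have "P \<in> Supp R S" using P(1) by (auto simp: Supp_def Spec_def)
    then have "P = M" using cru by auto
    then show ?thesis using P by auto
  qed
  have rad1: "radical R (colon_elt R x) \<subseteq> M" using radical_sub_prime[OF R Mp colM] .
  have rad2: "M \<subseteq> radical R (conductor R T)"
  proof
    fix m assume m: "m \<in> M"
    show "m \<in> radical R (conductor R T)"
    proof (rule ccontr)
      assume nm: "m \<notin> radical R (conductor R T)"
      have mR: "m \<in> R" using M m by (auto simp: maximal_ideal_def is_ideal_def)
      have "\<forall>n. m ^ n \<notin> conductor R T" using nm mR by (auto simp: radical_def)
      from zorn_prime[OF R I2 mR this] obtain P where P: "prime_ideal R P" "conductor R T \<subseteq> P" "m \<notin> P"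
        by blast
      have "P \<noteq> M" using m P(3) by auto
      then have "P \<notin> Supp R S" using cru by auto
      then have eqloc: "localize R P S R = localize R P S S" using P(1) by (auto simp: Supp_def Spec_def)
      have "\<forall>i<d. \<exists>v\<in>R - P. v * x ^ i \<in> R"
      proof (intro allI impI)
        fix i
        have "x ^ i \<in> S" using sr_pow[OF S x(1)] .
        then show "\<exists>v\<in>R - P. v * x ^ i \<in> R" using loc_in[OF R P(1) _ eqloc] by blast
      qed
      then obtain e where e: "e \<in> R - P" "\<forall>i<d. e * x ^ i \<in> R"
        using common_denom[OF R P(1), of d "\<lambda>i. x ^ i"] by blast
      have "\<forall>t\<in>T. e * t \<in> R" using mspan_kill[OF R e(2)] TG by blast
      then have "e \<in> conductor R T" using e(1) by (auto simp: conductor_def)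
      then show False using P(2) e(1) by blast
    qed
  qed
  have rad3: "radical R (conductor R T) \<subseteq> radical R (colon_elt R x)"
    using sub12 by (auto simp: radical_def)
  show ?thesis using rad1 rad2 rad3 unfolding T_def by blast
qed

lemma part1:
  assumes R: "is_subring R" and S: "is_subring S" and RS: "R \<subset> S" and int: "integral_ext R S"
    and fcp: "FCP R S" and J: "critical_ideal R S J"
  shows "maximal_ideal R J \<and> Supp R S = {J}"
proof -
  have RS': "R \<subseteq> S" using RS by auto
  obtain x where x: "x \<in> S" "x \<notin> R" using RS by auto
  have Jid: "is_ideal R J" and Jrad: "\<forall>y\<in>S - R. J = radical R (colon_elt R y)"
    using J by (auto simp: critical_ideal_def)
  have Jx: "J = radical R (colon_elt R x)" using Jrad x by auto
  have colJ: "colon_elt R y \<subseteq> J" if "y \<in> S - R" for y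
  proof -
    have "colon_elt R y \<subseteq> R" by (auto simp: colon_elt_def)
    then show ?thesis using sub_radical Jrad that by blast
  qed
  have J1: "1 \<notin> J" using Jx x by (auto simp: radical_def colon_elt_def)
  have JneR: "J \<noteq> R" using J1 sr_one[OF R] by auto
  have Jmax: "maximal_ideal R J"
  proof -
    have "\<forall>K. is_ideal R K \<and> J \<subseteq> K \<longrightarrow> K = J \<or> K = R"
    proof (intro allI impI)
      fix K assume K: "is_ideal R K \<and> J \<subseteq> K"
      show "K = J \<or> K = R"
      proof (rule ccontr)
        assume nK: "\<not> (K = J \<or> K = R)"
        then obtain a where a: "a \<in> K" "a \<notin> J" using K by blast
        have aR: "a \<in> R" using K a by (auto simp: is_ideal_def)
        obtain k c where c: "c \<in> R" "(1 - a * c) * a ^ k * x \<in> R"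
          using key[OF R S RS' int fcp x(1) aR] by blast
        define y where "y = a ^ k * x"
        have yS: "y \<in> S" unfolding y_def using sr_mult[OF S sr_pow[OF S] x(1)] aR RS' by blast
        have yR: "y \<notin> R"
        proof
          assume "y \<in> R"
          then have "a ^ k \<in> colon_elt R x" using sr_pow[OF R aR] unfolding y_def colon_elt_def by blast
          then have "a \<in> radical R (colon_elt R x)" using aR unfolding radical_def by blast
          then show False using a(2) Jx by simp
        qed
        have ac: "1 - a * c \<in> R" using sr_diff[OF R sr_one[OF R] sr_mult[OF R aR c(1)]] .
        have "(1 - a * c) * y \<in> R" using c(2) unfolding y_def by (simp add: mult.assoc)
        then have "1 - a * c \<in> colon_elt R y" using ac by (simp add: colon_elt_def)
        then have "1 - a * c \<in> J" using colJ yS yR by blast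
        then have "1 - a * c \<in> K" using K by blast
        moreover have "a * c \<in> K" using id_multr[of R K c a] K c(1) a(1) by blast
        ultimately have "(1 - a * c) + a * c \<in> K" using id_add[of R K] K by blast
        then have "1 \<in> K" by simp
        then have "K = R" using id_one[OF R] K by blast
        then show False using nK by blast
      qed
    qed
    then show ?thesis using Jid JneR by (simp add: maximal_ideal_def)
  qed
  have Jp: "prime_ideal R J" using max_prime[OF R Jmax] .
  have "J \<in> Supp R S"
  proof -
    have "loc_class R J S (x, 1) \<in> localize R J S S" using x prime_one[OF R Jp]
      by (auto simp: localize_def)
    moreover have "loc_class R J S (x, 1) \<notin> localize R J S R" using loc_notin[OF R Jp x(1) colJ] x by blast
    ultimately show ?thesis using Jp by (auto simp: Supp_def Spec_def)
  qed
  moreover have "P = J" if P: "P \<in> Supp R S" for P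
  proof -
    have Pp: "prime_ideal R P" and neq: "localize R P S R \<noteq> localize R P S S"
      using P by (auto simp: Supp_def Spec_def)
    have "localize R P S R \<subseteq> localize R P S S" using RS' by (auto simp: localize_def)
    then obtain z where z: "z \<in> localize R P S S" "z \<notin> localize R P S R" using neq by blast
    then obtain s v where sv: "s \<in> S" "v \<in> R - P" "z = loc_class R P S (s, v)"
      by (auto simp: localize_def)
    have sR: "s \<notin> R"
    proof
      assume "s \<in> R"
      then have "z \<in> localize R P S R" using sv unfolding localize_def by blast
      then show False using z by blast
    qed
    have "colon_elt R s \<subseteq> P"
    proof
      fix b assume b: "b \<in> colon_elt R s"
      show "b \<in> P"
      proof (rule ccontr)
        assume bP: "b \<notin> P"
        have bR: "b \<in> R" "b * s \<in> R" using b by (auto simp: colon_elt_def)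
        have bv: "b * v \<in> R - P" using prime_mult[OF Pp _ sv(2) R] bR bP by blast
        have "1 * (s * (b * v) - (b * s) * v) = 0" by (simp add: algebra_simps)
        then have "loc_class R P S (s, v) = loc_class R P S (b * s, b * v)"
          using loc_eq[OF R Pp sv(2) bv prime_one[OF R Pp]] by blast
        then have "z \<in> localize R P S R" using sv bR bv unfolding localize_def by blast
        then show False using z by blast
      qed
    qed
    then have "J \<subseteq> P" using Jrad sv(1) sR radical_sub_prime[OF R Pp] by blast
    moreover have "is_ideal R P" "P \<noteq> R" using Pp by (auto simp: prime_ideal_def)
    ultimately show "P = J" using Jmax unfolding maximal_ideal_def by blast
  qed
  ultimately have "Supp R S = {J}" by blast
  then show ?thesis using Jmax by blast
qed

theorem proposition6p8:
  fixes R S :: "'a::comm_ring_1 set"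
  assumes "is_subring R" and "is_subring S" and "R \<subset> S"
    and "integral_ext R S" and "FCP R S"
  shows "((\<exists>J. critical_ideal R S J) \<longleftrightarrow> (\<exists>M \<in> Max_ideals R. crucial R S M))
    \<and> (\<forall>M \<in> Max_ideals R. crucial R S M \<longrightarrow>
         critical_ideal R S M \<and> (\<forall>x \<in> S - R. M = radical R (conductor R (ring_adj R x))))"
proof -
  have RS': "R \<subseteq> S" using assms(3) by auto
  have P2: "critical_ideal R S M \<and> (\<forall>x \<in> S - R. M = radical R (conductor R (ring_adj R x)))"
    if M: "M \<in> Max_ideals R" "crucial R S M" for M
  proof -
    have Mm: "maximal_ideal R M" and cru: "Supp R S = {M}" using M by (auto simp: Max_ideals_def crucial_def)
    have Mi: "is_ideal R M" using Mm by (simp add: maximal_ideal_def)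
    have "M = radical R (colon_elt R x) \<and> M = radical R (conductor R (ring_adj R x))" if "x \<in> S - R" for x
      using part2[OF assms(1,2) RS' assms(4) Mm cru] that by blast
    then show ?thesis using Mi unfolding critical_ideal_def by blast
  qed
  have P1: "\<exists>M \<in> Max_ideals R. crucial R S M" if "critical_ideal R S J" for J
    using part1[OF assms that] by (auto simp: Max_ideals_def crucial_def)
  show ?thesis using P1 P2 by blast
qed


end
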